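(* Drag sum is associative (whenever the sums involved are defined, i.e. the drags are pairwise compatible), commutative ($D\oplus D'=D'\oplus D$ for compatible $D,D'$), idempotent ($D\oplus D=D$), and has the empty drag as identity element ($D\oplus\varnothing=D$).
   Context: Fix a set $\mathcal{F}$ of function symbols, each with a fixed arity, and a set $\mathcal{X}$ of variables disjoint from $\mathcal{F}$. A drag is a tuple $D=\langle V,R,L,X,S\rangle$ where: $V$ is a finite set of vertices; $R:V\to\mathbb{N}$ is a finite multiset of vertices, the roots ($v$ is rooted if $R(v)>0$); $S\subseteq V$ is the set of sprouts and $I=V\setminus S$ the set of internal vertices; $L:V\to\mathcal{F}\cup\mathcal{X}$ labels internal vertices by function symbols and sprouts by variables; $X:V\to V^*$ assigns to each vertex a list of successors whose length is the arity of its label (sprouts have no successors). If $b$ is the $k$-th element of $X(a)$, then $(a,k,b)$ is an edge with tail $a$ and head $b$. $\mathrm{pred}(v,D)$ is the number of edges with head $v$, and the indegree of $v$ is $\mathrm{In}(v,D)=\mathrm{pred}(v,D)+R(v)$. The empty drag $\varnothing$ has no vertices. Drags $D=\langle V,R,L,X,S\rangle$ and $D'=\langle V',R',L',X',S'\rangle$ are compatible if $V\cap V'$ is closed under the successor functions of both drags, $L$ and $L'$ coincide on $V\cap V'$, and every shared vertex $v$ has the same indegree in $D$ and in $D'$, this indegree being at least the total number of distinct edges of $D$ and of $D'$ with head $v$. Their sum is $D\oplus D'=\langle V\cup V',R'',L\cup L',X\cup X',S\cup S'\rangle$, where $R''(v)=R(v)-|\{\text{edges of }D'\text{ not in }D\text{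 with head }v\}|$ for $v\in V$ (for $v\in V\cap V'$ this equals $R'(v)-|\{\text{edges of }D\text{ not in }D'\text{ with head }v\}|$) and $R''(v)=R'(v)$ for $v\in V'\setminus V$. *)

theory Defs
  imports Main
begin

text \<open>Labels are of type 'f + 'x: Inl f for internal vertices, Inr x for sprouts.
  A drag is represented by a record; outside its vertex set the components take
  canonical values (no roots, no successors, label undefined), so that record
  equality is equality of drags.\<close>

record ('v, 'f, 'x) drag =
  verts   :: "'v set"
  roots   :: "'v \<Rightarrow> nat"
  lab     :: "'v \<Rightarrow> 'f + 'x"
  succs   :: "'v \<Rightarrow> 'v list"
  sprouts :: "'v set"

definition is_drag :: "('f \<Rightarrow> nat) \<Rightarrow> ('v, 'f, 'x) drag \<Rightarrow> bool" where
  "is_drag ar D \<longleftrightarrow>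
     finite (verts D) \<and>
     sprouts D \<subseteq> verts D \<and>
     (\<forall>v. v \<notin> verts D \<longrightarrow> roots D v = 0 \<and> succs D v = [] \<and> lab D v = undefined) \<and>
     (\<forall>v \<in> verts D. set (succs D v) \<subseteq> verts D) \<and>
     (\<forall>v \<in> sprouts D. (\<exists>x. lab D v = Inr x) \<and> succs D v = []) \<and>
     (\<forall>v \<in> verts D - sprouts D. \<exists>f. lab D v = Inl f \<and> length (succs D v) = ar f)"

definition empty_drag :: "('v, 'f, 'x) drag" where
  "empty_drag = \<lparr>verts = {}, roots = (\<lambda>_. 0), lab = (\<lambda>_. undefined),
                 succs = (\<lambda>_. []), sprouts = {}\<rparr>"

text \<open>Edges (a,k,b): b is the k-th (1-based) successor of a.\<close>
definition edges :: "('v, 'f, 'x) drag \<Rightarrow> ('v \<times> nat \<times> 'v) set" where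
  "edges D = {(a, k, b). a \<in> verts D \<and> 1 \<le> k \<and> k \<le> length (succs D a)
                          \<and> succs D a ! (k - 1) = b}"

definition edges_to :: "('v \<times> nat \<times> 'v) set \<Rightarrow> 'v \<Rightarrow> ('v \<times> nat \<times> 'v) set" where
  "edges_to E v = {e \<in> E. snd (snd e) = v}"

definition pred :: "'v \<Rightarrow> ('v, 'f, 'x) drag \<Rightarrow> nat" where
  "pred v D = card (edges_to (edges D) v)"

definition indeg :: "'v \<Rightarrow> ('v, 'f, 'x) drag \<Rightarrow> nat" where
  "indeg v D = pred v D + roots D v"

definition compatible :: "('v, 'f, 'x) drag \<Rightarrow> ('v, 'f, 'x) drag \<Rightarrow> bool" where
  "compatible D D' \<longleftrightarrow>
     (\<forall>v \<in> verts D \<inter> verts D'.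
        set (succs D v) \<subseteq> verts D \<inter> verts D' \<and>
        set (succs D' v) \<subseteq> verts D \<inter> verts D' \<and>
        lab D v = lab D' v \<and>
        succs D v = succs D' v \<and>
        indeg v D = indeg v D' \<and>
        card (edges_to (edges D \<union> edges D') v) \<le> indeg v D)"

definition drag_sum :: "('v, 'f, 'x) drag \<Rightarrow> ('v, 'f, 'x) drag \<Rightarrow> ('v, 'f, 'x) drag"
  (infixl "\<oplus>\<^sub>D" 65) where
  "drag_sum D D' = \<lparr>verts = verts D \<union> verts D',
     roots = (\<lambda>v. if v \<in> verts D
                   then roots D v - card (edges_to (edges D' - edges D) v)
                   else roots D' v),
     lab = (\<lambda>v. if v \<in> verts D then lab D v else lab D' v),
     succs = (\<lambda>v. if v \<in> verts D then succs D v else succs D' v),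
     sprouts = sprouts D \<union> sprouts D'\<rparr>"

end

theory Submission
  imports Defs
begin

lemma edges_eq: "edges D = (\<Union>a\<in>verts D. (\<lambda>k. (a,k,succs D a ! (k-1))) ` {1..length (succs D a)})"
  unfolding edges_def by auto

lemma edges_finite: "is_drag ar D \<Longrightarrow> finite (edges D)"
  unfolding edges_eq is_drag_def by auto

lemma edges_to_finite: "is_drag ar D \<Longrightarrow> finite (edges_to (edges D) v)"
  unfolding edges_to_def using edges_finite[of ar D] by auto

lemma no_edges_into: "is_drag ar D \<Longrightarrow> v \<notin> verts D \<Longrightarrow> edges_to (edges D) v = {}"
proof -
  assume d: "is_drag ar D" and v: "v \<notin> verts D"
  { fix a k assume "a \<in> verts D" "1 \<le> k" "k \<le> length (succs D a)" "succs D a ! (k - 1) = v"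
    hence "v \<in> set (succs D a)" by (metis Suc_le_eq Suc_pred' nth_mem not_one_le_zero zero_less_iff_neq_zero)
    hence False using d v \<open>a \<in> verts D\<close> unfolding is_drag_def by blast }
  thus ?thesis unfolding edges_to_def edges_def by auto
qed

lemma edges_sum: "compatible D D' \<Longrightarrow> edges (D \<oplus>\<^sub>D D') = edges D \<union> edges D'"
proof -
  assume c: "compatible D D'"
  have s: "succs (D \<oplus>\<^sub>D D') a = (if a \<in> verts D then succs D a else succs D' a)"
    "verts (D \<oplus>\<^sub>D D') = verts D \<union> verts D'" for a
    unfolding drag_sum_def by auto
  have ag: "a \<in> verts D \<Longrightarrow> a \<in> verts D' \<Longrightarrow> succs D a = succs D' a" for a
    using c unfolding compatible_def by blast
  show ?thesis unfolding edges_def s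
    apply (rule set_eqI)
    apply clarsimp
    using ag by (metis (no_types, lifting))
qed

lemma sum_sel: "verts (D \<oplus>\<^sub>D D') = verts D \<union> verts D'"
  "roots (D \<oplus>\<^sub>D D') v = (if v \<in> verts D
                   then roots D v - card (edges_to (edges D' - edges D) v)
                   else roots D' v)"
  "lab (D \<oplus>\<^sub>D D') v = (if v \<in> verts D then lab D v else lab D' v)"
  "succs (D \<oplus>\<^sub>D D') v = (if v \<in> verts D then succs D v else succs D' v)"
  "sprouts (D \<oplus>\<^sub>D D') = sprouts D \<union> sprouts D'"
  "drag.more (D \<oplus>\<^sub>D D') = ()"
  unfolding drag_sum_def by auto

lemma edges_empty: "edges empty_drag = {}"
  unfolding edges_def empty_drag_def by auto

lemma edges_to_diff: "edges_to (A - B) v = edges_to A v - edges_to B v"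
  "edges_to (A \<union> B) v = edges_to A v \<union> edges_to B v"
  "edges_to {} v = {}"
  unfolding edges_to_def by auto

lemma assoc:
  assumes d1: "is_drag ar D1" and d2: "is_drag ar D2" and d3: "is_drag ar D3"
    and c12: "compatible D1 D2" and c23: "compatible D2 D3"
  shows "(D1 \<oplus>\<^sub>D D2) \<oplus>\<^sub>D D3 = D1 \<oplus>\<^sub>D (D2 \<oplus>\<^sub>D D3)"
proof -
  have e12: "edges (D1 \<oplus>\<^sub>D D2) = edges D1 \<union> edges D2" using edges_sum[OF c12] .
  have e23: "edges (D2 \<oplus>\<^sub>D D3) = edges D2 \<union> edges D3" using edges_sum[OF c23] .
  have r: "roots ((D1 \<oplus>\<^sub>D D2) \<oplus>\<^sub>D D3) v = roots (D1 \<oplus>\<^sub>D (D2 \<oplus>\<^sub>D D3)) v" for v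
  proof (cases "v \<in> verts D1")
    case True
    let ?A = "edges_to (edges D2) v - edges_to (edges D1) v"
    let ?B = "edges_to (edges D3) v - (edges_to (edges D1) v \<union> edges_to (edges D2) v)"
    have fA: "finite ?A" using edges_to_finite[OF d2] by auto
    have fB: "finite ?B" using edges_to_finite[OF d3] by auto
    have "edges_to (edges D2 \<union> edges D3 - edges D1) v = ?A \<union> ?B" "?A \<inter> ?B = {}"
      unfolding edges_to_diff by auto
    hence "card (edges_to (edges D2 \<union> edges D3 - edges D1) v) = card ?A + card ?B"
      using fA fB card_Un_disjoint by metis
    thus ?thesis using True by (simp add: sum_sel e12 e23 edges_to_diff)
  next
    case False
    have n1: "edges_to (edges D1) v = {}" using no_edges_into[OF d1 False] .
    show ?thesis using False by (simp add: sum_sel e12 e23 edges_to_diff n1)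
  qed
  show ?thesis
    apply (rule drag.equality)
    using r by (auto simp: drag_sum_def)
qed

lemma comm:
  assumes d: "is_drag ar D" and d': "is_drag ar D'" and c: "compatible D D'"
  shows "D \<oplus>\<^sub>D D' = D' \<oplus>\<^sub>D D"
proof -
  have r: "roots (D \<oplus>\<^sub>D D') v = roots (D' \<oplus>\<^sub>D D) v" for v
  proof (cases "v \<in> verts D \<and> v \<in> verts D'")
    case True
    let ?A = "edges_to (edges D) v" and ?B = "edges_to (edges D') v"
    have fA: "finite ?A" "finite ?B" using edges_to_finite[OF d] edges_to_finite[OF d'] by auto
    have cc: "indeg v D = indeg v D' \<and> card (edges_to (edges D \<union> edges D') v) \<le> indeg v D"
      using c True unfolding compatible_def by blast
    have i: "card ?A + roots D v = card ?B + roots D' v"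
      and le: "card (?A \<union> ?B) \<le> card ?A + roots D v"
      using cc unfolding indeg_def pred_def edges_to_diff by auto
    have u1: "card (?A \<union> ?B) = card ?A + card (?B - ?A)"
      using fA by (metis Un_Diff_cancel card_Un_disjoint Diff_disjoint finite_Diff)
    have u2: "card (?A \<union> ?B) = card ?B + card (?A - ?B)"
      using fA by (metis Un_Diff_cancel Un_commute card_Un_disjoint Diff_disjoint finite_Diff)
    show ?thesis using True i le u1 u2 unfolding drag_sum_def by (simp add: edges_to_diff)
  next
    case False
    then show ?thesis using no_edges_into[OF d] no_edges_into[OF d'] d d'
      unfolding drag_sum_def is_drag_def by (auto simp: edges_to_diff)
  qed
  have l: "lab (D \<oplus>\<^sub>D D') v = lab (D' \<oplus>\<^sub>D D) v" "succs (D \<oplus>\<^sub>D D') v = succs (D' \<oplus>\<^sub>D D) v" for v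
    using c d d' unfolding drag_sum_def compatible_def is_drag_def by auto
  show ?thesis
    apply (rule drag.equality)
    using r l by (auto simp: drag_sum_def)
qed

lemma idem: "is_drag ar D \<Longrightarrow> D \<oplus>\<^sub>D D = D"
  apply (rule drag.equality)
  by (auto simp: drag_sum_def is_drag_def edges_to_def)

lemma unit: "is_drag ar D \<Longrightarrow> D \<oplus>\<^sub>D empty_drag = D"
  apply (rule drag.equality)
  by (auto simp: sum_sel is_drag_def edges_empty edges_to_diff fun_eq_iff, auto simp: empty_drag_def)

theorem mainTheorem11:
  fixes ar :: "'f \<Rightarrow> nat"
  shows "(\<forall>D1 D2 D3 :: ('v, 'f, 'x) drag.
            is_drag ar D1 \<and> is_drag ar D2 \<and> is_drag ar D3 \<and>
            compatible D1 D2 \<and> compatible D2 D3 \<and> compatible D1 D3 \<and>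
            compatible (D1 \<oplus>\<^sub>D D2) D3 \<and> compatible D1 (D2 \<oplus>\<^sub>D D3) \<longrightarrow>
            (D1 \<oplus>\<^sub>D D2) \<oplus>\<^sub>D D3 = D1 \<oplus>\<^sub>D (D2 \<oplus>\<^sub>D D3)) \<and>
         (\<forall>D D' :: ('v, 'f, 'x) drag.
            is_drag ar D \<and> is_drag ar D' \<and> compatible D D' \<longrightarrow>
            D \<oplus>\<^sub>D D' = D' \<oplus>\<^sub>D D) \<and>
         (\<forall>D :: ('v, 'f, 'x) drag. is_drag ar D \<longrightarrow> D \<oplus>\<^sub>D D = D) \<and>
         (\<forall>D :: ('v, 'f, 'x) drag. is_drag ar D \<longrightarrow> D \<oplus>\<^sub>D empty_drag = D)"
  using assoc[of ar] comm[of ar] idem[of ar] unit[of ar] by blast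

end
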